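(* For every integer $t\ge 2$, with $n:=2^{t-2}$, the Erdős–Szekeres construction of $n$ points can be realized with integer coordinates: there is an Erdős–Szekeres construction for $t$, in general position, all of whose points have integer coordinates and lie in an axis-parallel square of side length $O(n^2(\log_2 n)^3)$ (as $t\to\infty$).
   Context: For finite point sets $X,Y$ in the plane, $X$ is high above $Y$ if every line determined by two points of $X$ lies strictly above every point of $Y$, and every line determined by two points of $Y$ lies strictly below every point of $X$. For positive integers $k,l$, an $S_{k,l}$-set is defined recursively: if $k\le 2$ or $l\le 2$ it is a single point; otherwise it is a set $L\cup R$ where $L$ is an $S_{k-1,l}$-set, $R$ is an $S_{k,l-1}$-set, every point of $R$ lies strictly to the right of every point of $L$, and $R$ is high above $L$. (An $S_{k,l}$-set has $\binom{k+l-4}{k-2}$ points.) An Erdős–Szekeres construction for $t$ is a point set $\bigcup_{i=0}^{t-2}A_i$, where each $A_i$ is an $S_{t-i,i+2}$-set, such that: for $i<j$ every point of $A_i$ has smaller $x$-coordinate than every point of $A_j$; every line through a point of $A_i$ and a point of $A_j$ with $i\ne j$ has negative slope; and for $0\le i<j<k\le t-2$ and any $p_i\in A_i$, $p_j\in A_j$, $p_k\in A_k$, the triple $(p_i,p_j,p_k)$ is a right (clockwise) turn. It has $2^{t-2}$ points. *)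

theory Defs
  imports Complex_Main
begin

type_synonym point = "real \<times> real"

definition line_above :: "point \<Rightarrow> point \<Rightarrow> point \<Rightarrow> bool" where
  "line_above p q r \<longleftrightarrow> fst p \<noteq> fst q \<and>
     snd r < snd p + (snd q - snd p) / (fst q - fst p) * (fst r - fst p)"

definition line_below :: "point \<Rightarrow> point \<Rightarrow> point \<Rightarrow> bool" where
  "line_below p q r \<longleftrightarrow> fst p \<noteq> fst q \<and>
     snd r > snd p + (snd q - snd p) / (fst q - fst p) * (fst r - fst p)"

definition high_above :: "point set \<Rightarrow> point set \<Rightarrow> bool" where
  "high_above X Y \<longleftrightarrow>
     (\<forall>p\<in>X. \<forall>q\<in>X. p \<noteq> q \<longrightarrow> (\<forall>r\<in>Y. line_above p q r)) \<and>
     (\<forall>p\<in>Y. \<forall>q\<in>Y. p \<noteq> q \<longrightarrow> (\<forall>r\<in>X. line_below p q r))"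

fun S_set :: "nat \<Rightarrow> nat \<Rightarrow> point set \<Rightarrow> bool" where
  "S_set k l X =
     (if k \<le> 2 \<or> l \<le> 2 then (\<exists>p. X = {p})
      else (\<exists>L R. X = L \<union> R \<and> S_set (k - 1) l L \<and> S_set k (l - 1) R \<and>
                 (\<forall>p\<in>L. \<forall>q\<in>R. fst p < fst q) \<and> high_above R L))"

definition right_turn :: "point \<Rightarrow> point \<Rightarrow> point \<Rightarrow> bool" where
  "right_turn p q r \<longleftrightarrow>
     (fst q - fst p) * (snd r - snd p) - (snd q - snd p) * (fst r - fst p) < 0"

definition ES_construction :: "nat \<Rightarrow> point set \<Rightarrow> bool" where
  "ES_construction t P \<longleftrightarrow> (\<exists>A :: nat \<Rightarrow> point set.
     P = (\<Union>i\<in>{0..t-2}. A i) \<and>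
     (\<forall>i\<in>{0..t-2}. S_set (t - i) (i + 2) (A i)) \<and>
     (\<forall>i\<in>{0..t-2}. \<forall>j\<in>{0..t-2}. i < j \<longrightarrow> (\<forall>p\<in>A i. \<forall>q\<in>A j. fst p < fst q)) \<and>
     (\<forall>i\<in>{0..t-2}. \<forall>j\<in>{0..t-2}. i \<noteq> j \<longrightarrow> (\<forall>p\<in>A i. \<forall>q\<in>A j.
         fst p \<noteq> fst q \<and> (snd q - snd p) / (fst q - fst p) < 0)) \<and>
     (\<forall>i j k. i < j \<and> j < k \<and> k \<le> t - 2 \<longrightarrow>
         (\<forall>p\<in>A i. \<forall>q\<in>A j. \<forall>r\<in>A k. right_turn p q r)))"

definition collinear3 :: "point \<Rightarrow> point \<Rightarrow> point \<Rightarrow> bool" where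
  "collinear3 p q r \<longleftrightarrow>
     (fst q - fst p) * (snd r - snd p) - (snd q - snd p) * (fst r - fst p) = 0"

definition general_position :: "point set \<Rightarrow> bool" where
  "general_position P \<longleftrightarrow> (\<forall>p\<in>P. \<forall>q\<in>P. \<forall>r\<in>P.
     p \<noteq> q \<and> q \<noteq> r \<and> p \<noteq> r \<longrightarrow> \<not> collinear3 p q r)"

definition integral_points :: "point set \<Rightarrow> bool" where
  "integral_points P \<longleftrightarrow> (\<forall>p\<in>P. fst p \<in> \<int> \<and> snd p \<in> \<int>)"

definition in_square :: "real \<Rightarrow> point set \<Rightarrow> bool" where
  "in_square s P \<longleftrightarrow> (\<exists>a b. \<forall>p\<in>P.
     a \<le> fst p \<and> fst p \<le> a + s \<and> b \<le> snd p \<and> snd p \<le> b + s)"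

end

theory Submission
  imports Defs
begin


definition det3 :: "point \<Rightarrow> point \<Rightarrow> point \<Rightarrow> real" where
  "det3 p q r = (fst q - fst p) * (snd r - snd p) - (snd q - snd p) * (fst r - fst p)"

lemma line_above_det:
  assumes "fst p < fst q" shows "line_above p q r \<longleftrightarrow> det3 p q r < 0"
proof -
  have D: "fst q - fst p > 0" using assms by simp
  have "line_above p q r \<longleftrightarrow> snd r - snd p < (snd q - snd p) / (fst q - fst p) * (fst r - fst p)"
    using assms by (auto simp: line_above_def)
  also have "\<dots> \<longleftrightarrow> (snd r - snd p) * (fst q - fst p) < (snd q - snd p) * (fst r - fst p)"
    using D by (simp add: field_simps)
  finally show ?thesis by (simp add: det3_def algebra_simps)
qed

lemma line_below_det:
  assumes "fst p < fst q" shows "line_below p q r \<longleftrightarrow> det3 p q r > 0"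
proof -
  have D: "fst q - fst p > 0" using assms by simp
  have "line_below p q r \<longleftrightarrow> snd r - snd p > (snd q - snd p) / (fst q - fst p) * (fst r - fst p)"
    using assms by (auto simp: line_below_def)
  also have "\<dots> \<longleftrightarrow> (snd r - snd p) * (fst q - fst p) > (snd q - snd p) * (fst r - fst p)"
    using D by (simp add: field_simps)
  finally show ?thesis by (simp add: det3_def algebra_simps)
qed

lemma line_eq_sym:
  fixes p q r :: point
  assumes "fst p \<noteq> fst q"
  shows "snd p + (snd q - snd p) / (fst q - fst p) * (fst r - fst p)
       = snd q + (snd p - snd q) / (fst p - fst q) * (fst r - fst q)"
proof -
  have "fst q - fst p \<noteq> 0" "fst p - fst q \<noteq> 0" using assms by auto
  then show ?thesis by (simp add: field_simps)
qed

lemma line_above_sym: "line_above p q r = line_above q p r"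
proof (cases "fst p = fst q")
  case True then show ?thesis by (simp add: line_above_def)
next
  case False
  have e: "snd p + (snd q - snd p) / (fst q - fst p) * (fst r - fst p)
       = snd q + (snd p - snd q) / (fst p - fst q) * (fst r - fst q)"
    by (rule line_eq_sym[OF False])
  have "fst q \<noteq> fst p" using False by simp
  then show ?thesis using False unfolding line_above_def e by blast
qed

lemma line_below_sym: "line_below p q r = line_below q p r"
proof (cases "fst p = fst q")
  case True then show ?thesis by (simp add: line_below_def)
next
  case False
  have e: "snd p + (snd q - snd p) / (fst q - fst p) * (fst r - fst p)
       = snd q + (snd p - snd q) / (fst p - fst q) * (fst r - fst q)"
    by (rule line_eq_sym[OF False])
  have "fst q \<noteq> fst p" using False by simp
  then show ?thesis using False unfolding line_below_def e by blast
qed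

lemma col_det: "collinear3 p q r \<longleftrightarrow> det3 p q r = 0"
  by (simp add: collinear3_def det3_def)

lemma det3_swap12: "det3 q p r = - det3 p q r"
  unfolding det3_def by (simp add: left_diff_distrib right_diff_distrib)
lemma det3_swap23: "det3 p r q = - det3 p q r"
  unfolding det3_def by (simp add: left_diff_distrib right_diff_distrib)

lemma col_swap12: "collinear3 q p r = collinear3 p q r"
  unfolding col_det det3_swap12[of p q r] by simp
lemma col_swap23: "collinear3 p r q = collinear3 p q r"
  unfolding col_det det3_swap23[of p q r] by simp

lemma geo4: "(\<Sum>k<j. (4::real)^k) = (4^j - 1)/3"
  by (induction j) (auto simp: field_simps)

lemma geo4': "3 * (\<Sum>k<j. (4::real)^k) = 4^j - 1"
  using geo4[of j] by simp

lemma sumA: "(\<Sum>k<j. (3*(real j - real k) + 2) * (4::real)^k) = 2*4^j - (real j + 2)"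
proof (induction j)
  case 0 then show ?case by simp
next
  case (Suc j)
  have "(\<Sum>k<Suc j. (3*(real (Suc j) - real k) + 2) * (4::real)^k)
      = (\<Sum>k<j. (3*(real j - real k) + 2) * (4::real)^k + 3 * 4^k) + 5 * 4^j"
    by (simp add: algebra_simps)
  also have "\<dots> = (2*4^j - (real j + 2)) + (4^j - 1) + 5 * 4^j"
    by (simp only: sum.distrib sum_distrib_left[symmetric] Suc.IH geo4')
  also have "\<dots> = 2*4^(Suc j) - (real (Suc j) + 2)" by simp
  finally show ?case .
qed

lemma sumB: "(\<Sum>k<j. (3*(real j - real k) - 1) * (4::real)^k) = 4^j - (real j + 1)"
proof (induction j)
  case 0 then show ?case by simp
next
  case (Suc j)
  have "(\<Sum>k<Suc j. (3*(real (Suc j) - real k) - 1) * (4::real)^k)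
      = (\<Sum>k<j. (3*(real j - real k) - 1) * (4::real)^k + 3 * 4^k) + 2 * 4^j"
    by (simp add: algebra_simps)
  also have "\<dots> = (4^j - (real j + 1)) + (4^j - 1) + 2 * 4^j"
    by (simp only: sum.distrib sum_distrib_left[symmetric] Suc.IH geo4')
  also have "\<dots> = 4^(Suc j) - (real (Suc j) + 1)" by simp
  finally show ?case .
qed

lemma abs_sum_le:
  fixes g c :: "nat \<Rightarrow> real"
  assumes "\<forall>k. \<bar>g k\<bar> \<le> 1" "\<forall>k<j. c k \<ge> 0"
  shows "\<bar>\<Sum>k<j. g k * c k\<bar> \<le> (\<Sum>k<j. c k)"
proof -
  have "\<bar>\<Sum>k<j. g k * c k\<bar> \<le> (\<Sum>k<j. \<bar>g k * c k\<bar>)" by (rule sum_abs)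
  also have "\<dots> \<le> (\<Sum>k<j. c k)"
  proof (rule sum_mono)
    fix k assume "k \<in> {..<j}" then show "\<bar>g k * c k\<bar> \<le> c k"
      using assms by (simp add: abs_mult mult_left_le_one_le abs_of_nonneg)
  qed
  finally show ?thesis .
qed



lemma pos_sum:
  fixes g :: "nat \<Rightarrow> real"
  assumes g: "\<forall>k. \<bar>g k\<bar> \<le> 1"
  shows "4^j + (\<Sum>k<j. g k * 4^k) > 0"
proof -
  have A: "\<bar>\<Sum>k<j. g k * 4^k\<bar> \<le> (\<Sum>k<j. (4::real)^k)"
    by (rule abs_sum_le) (use g in auto)
  have B: "3 * (\<Sum>k<j. (4::real)^k) = 4^j - 1" by (rule geo4')
  have p: "(4::real)^j > 0" by simp
  show ?thesis using A B p unfolding abs_le_iff by linarith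
qed

lemma upper_slope:
  fixes g :: "nat \<Rightarrow> real"
  assumes g: "\<forall>k. \<bar>g k\<bar> \<le> 1"
  shows "3*((real j+1)*4^j + (\<Sum>k<j. g k * ((real k+1)*4^k)))
         < (3*real j+5)*(4^j + (\<Sum>k<j. g k * 4^k))"
proof -
  define S where "S = (\<Sum>k<j. g k * 4^k)"
  define U where "U = (\<Sum>k<j. g k * ((real k+1)*4^k))"
  have "(3*real j+5)*S - 3*U = (\<Sum>k<j. (3*real j+5)*(g k * 4^k) - 3*(g k * ((real k+1)*4^k)))"
    by (simp add: S_def U_def sum_distrib_left sum_subtractf)
  also have "\<dots> = (\<Sum>k<j. g k * ((3*(real j - real k)+2)*4^k))"
    by (rule sum.cong) (simp_all add: algebra_simps)
  finally have e: "(3*real j+5)*S - 3*U = (\<Sum>k<j. g k * ((3*(real j - real k)+2)*4^k))" .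
  have "\<bar>\<Sum>k<j. g k * ((3*(real j - real k)+2)*4^k)\<bar> \<le> (\<Sum>k<j. (3*(real j - real k)+2)*(4::real)^k)"
    by (rule abs_sum_le) (use g in auto)
  also have "\<dots> = 2*4^j - (real j + 2)" by (rule sumA)
  finally have "\<bar>(3*real j+5)*S - 3*U\<bar> \<le> 2*4^j - (real j + 2)" using e by simp
  then show ?thesis unfolding S_def[symmetric] U_def[symmetric] by (simp add: algebra_simps)
qed

lemma lower_slope:
  fixes g :: "nat \<Rightarrow> real"
  assumes g: "\<forall>k. \<bar>g k\<bar> \<le> 1"
  shows "3*((real j+1)*4^j + (\<Sum>k<j. g k * ((real k+1)*4^k)))
         > (3*real j+2)*(4^j + (\<Sum>k<j. g k * 4^k))"
proof -
  define S where "S = (\<Sum>k<j. g k * 4^k)"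
  define U where "U = (\<Sum>k<j. g k * ((real k+1)*4^k))"
  have "(3*real j+2)*S - 3*U = (\<Sum>k<j. (3*real j+2)*(g k * 4^k) - 3*(g k * ((real k+1)*4^k)))"
    by (simp add: S_def U_def sum_distrib_left sum_subtractf)
  also have "\<dots> = (\<Sum>k<j. g k * ((3*(real j - real k)-1)*4^k))"
    by (rule sum.cong) (simp_all add: algebra_simps)
  finally have e: "(3*real j+2)*S - 3*U = (\<Sum>k<j. g k * ((3*(real j - real k)-1)*4^k))" .
  have "\<bar>\<Sum>k<j. g k * ((3*(real j - real k)-1)*4^k)\<bar> \<le> (\<Sum>k<j. (3*(real j - real k)-1)*(4::real)^k)"
    by (rule abs_sum_le) (use g in auto)
  also have "\<dots> = 4^j - (real j + 1)" by (rule sumB)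
  finally have "\<bar>(3*real j+2)*S - 3*U\<bar> \<le> 4^j - (real j + 1)" using e by simp
  then show ?thesis unfolding S_def[symmetric] U_def[symmetric] by (simp add: algebra_simps)
qed

lemma slope_cmp:
  fixes g h :: "nat \<Rightarrow> real"
  assumes g: "\<forall>k. \<bar>g k\<bar> \<le> 1" and h: "\<forall>k. \<bar>h k\<bar> \<le> 1" and jm: "j < m"
    and ex: "ex = 4^j + (\<Sum>k<j. g k * 4^k)"
    and ey: "ey = (real j+1)*4^j + (\<Sum>k<j. g k * ((real k+1)*4^k))"
    and fx: "fx = 4^m + (\<Sum>k<m. h k * 4^k)"
    and fy: "fy = (real m+1)*4^m + (\<Sum>k<m. h k * ((real k+1)*4^k))"
  shows "ex > 0" "fx > 0" "ey * fx < fy * ex"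
proof -
  show ex0: "ex > 0" using pos_sum[OF g] ex by simp
  show fx0: "fx > 0" using pos_sum[OF h] fx by simp
  have u: "3*ey < (3*real j+5)*ex" using upper_slope[OF g, of j] ex ey by simp
  have l: "3*fy > (3*real m+2)*fx" using lower_slope[OF h, of m] fx fy by simp
  have jm': "3*real j+5 \<le> 3*real m+2" using jm by simp
  have "3*ey*fx < (3*real j+5)*ex*fx" using u fx0 by simp
  also have "\<dots> \<le> (3*real m+2)*fx*ex" using jm' ex0 fx0
    by (simp add: mult.commute mult.left_commute mult_right_mono)
  also have "\<dots> < 3*fy*ex" using l ex0 by simp
  finally show "ey * fx < fy * ex" by simp
qed



definition Xs :: "nat \<Rightarrow> (nat \<Rightarrow> bool) \<Rightarrow> real" where
  "Xs n w = (\<Sum>k<n. of_bool (w k) * 4^k)"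
definition Ys :: "nat \<Rightarrow> (nat \<Rightarrow> bool) \<Rightarrow> real" where
  "Ys n w = (\<Sum>k<n. of_bool (w k) * ((real k + 1) * 4^k))"

lemma diff_top:
  fixes dd c :: "nat \<Rightarrow> real"
  assumes "j < n" "dd j = 1" "\<forall>k. j < k \<and> k < n \<longrightarrow> dd k = 0"
  shows "(\<Sum>k<n. dd k * c k) = c j + (\<Sum>k<j. dd k * c k)"
proof -
  have U: "{..<n} = {..<Suc j} \<union> {Suc j..<n}" using assms(1) by auto
  have "(\<Sum>k<n. dd k * c k) = (\<Sum>k<Suc j. dd k * c k) + (\<Sum>k\<in>{Suc j..<n}. dd k * c k)"
    unfolding U by (rule sum.union_disjoint) auto
  also have "(\<Sum>k\<in>{Suc j..<n}. dd k * c k) = 0"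
    using assms(3) by (intro sum.neutral) auto
  finally show ?thesis using assms(2) by simp
qed

lemma Xs_diff: "Xs n b - Xs n a = (\<Sum>k<n. (of_bool (b k) - of_bool (a k)) * 4^k)"
  unfolding Xs_def by (simp add: sum_subtractf left_diff_distrib)
lemma Ys_diff: "Ys n b - Ys n a = (\<Sum>k<n. (of_bool (b k) - of_bool (a k)) * ((real k + 1) * 4^k))"
  unfolding Ys_def by (simp add: sum_subtractf left_diff_distrib)

lemma top_diff_sums:
  assumes "j < n" "\<not> a j" "b j" "\<forall>k. j < k \<and> k < n \<longrightarrow> a k = b k"
  shows "Xs n b - Xs n a = 4^j + (\<Sum>k<j. (of_bool (b k) - of_bool (a k)) * 4^k)"
    "Ys n b - Ys n a = (real j + 1) * 4^j + (\<Sum>k<j. (of_bool (b k) - of_bool (a k)) * ((real k + 1) * 4^k))"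
  unfolding Xs_diff Ys_diff using assms by (auto intro!: diff_top)

lemma bitdiff_abs: "\<forall>k. \<bar>(of_bool (b k) - of_bool (a k)) :: real\<bar> \<le> 1"
  by auto

lemma top_lt:
  assumes "j < n" "\<not> a j" "b j" "\<forall>k. j < k \<and> k < n \<longrightarrow> a k = b k"
  shows "Xs n a < Xs n b" "Ys n a < Ys n b"
proof -
  have "Xs n b - Xs n a > 0" unfolding top_diff_sums[OF assms] by (rule pos_sum[OF bitdiff_abs])
  then show "Xs n a < Xs n b" by simp
  have l: "3*(Ys n b - Ys n a) > (3*real j+2)*(Xs n b - Xs n a)"
    unfolding top_diff_sums[OF assms] by (rule lower_slope[OF bitdiff_abs])
  have "(3*real j+2)*(Xs n b - Xs n a) > 0" using \<open>Xs n b - Xs n a > 0\<close> by simp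
  then show "Ys n a < Ys n b" using l by simp
qed

definition PP :: "nat \<Rightarrow> (nat \<Rightarrow> bool) \<Rightarrow> point" where
  "PP n w = (Xs n w, Ys n w)"

lemma core:
  assumes jm: "j < m" and mn: "m < n" and aj: "\<not> a j" and bj: "b j"
    and ab: "\<forall>k. j < k \<and> k < n \<longrightarrow> a k = b k"
    and ra: "\<forall>k. m < k \<and> k < n \<longrightarrow> r k = a k" and arm: "a m \<noteq> r m"
  shows "Xs n a < Xs n b"
    "a m \<Longrightarrow> det3 (PP n a) (PP n b) (PP n r) < 0"
    "\<not> a m \<Longrightarrow> det3 (PP n a) (PP n b) (PP n r) > 0"
proof -
  have jn: "j < n" using jm mn by simp
  note E = top_diff_sums[where a=a and b=b, OF jn aj bj ab]
  show "Xs n a < Xs n b" using top_lt[OF jn aj bj ab] by simp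
  {
    assume am: "a m"
    have rm: "\<not> r m" using am arm by simp
    have ar: "\<forall>k. m < k \<and> k < n \<longrightarrow> r k = a k" using ra by simp
    have ar': "\<forall>k. m < k \<and> k < n \<longrightarrow> r k = a k" using ra by simp
    note F = top_diff_sums[where a=r and b=a, OF mn rm am ar']
    note C = slope_cmp[OF bitdiff_abs bitdiff_abs jm E F]
    have "det3 (PP n a) (PP n b) (PP n r)
        = (Ys n b - Ys n a) * (Xs n a - Xs n r) - (Xs n b - Xs n a) * (Ys n a - Ys n r)"
      unfolding det3_def PP_def by (simp add: left_diff_distrib right_diff_distrib)
    then show "det3 (PP n a) (PP n b) (PP n r) < 0" using C(3) by (simp add: mult.commute)
  }
  {
    assume am: "\<not> a m"
    have rm: "r m" using am arm by simp
    have bm: "\<not> b m" using am ab jm mn by auto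
    have br: "\<forall>k. m < k \<and> k < n \<longrightarrow> b k = r k" using ra ab jm by auto
    note F = top_diff_sums[where a=b and b=r, OF mn bm rm br]
    note C = slope_cmp[OF bitdiff_abs bitdiff_abs jm E F]
    have "det3 (PP n a) (PP n b) (PP n r)
        = (Xs n b - Xs n a) * (Ys n r - Ys n b) - (Ys n b - Ys n a) * (Xs n r - Xs n b)"
      unfolding det3_def PP_def by (simp add: left_diff_distrib right_diff_distrib)
    then show "det3 (PP n a) (PP n b) (PP n r) > 0" using C(3) by (simp add: mult.commute)
  }
qed



definition QP :: "nat \<Rightarrow> real \<Rightarrow> real \<Rightarrow> (nat \<Rightarrow> bool) \<Rightarrow> point" where
  "QP n c1 c2 w = (c1 + Xs n w, c2 + Ys n w)"

lemma det3_QP: "det3 (QP n c1 c2 a) (QP n c1 c2 b) (QP n c1 c2 r) = det3 (PP n a) (PP n b) (PP n r)"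
  unfolding det3_def QP_def PP_def by simp

lemma fst_QP: "fst (QP n c1 c2 a) < fst (QP n c1 c2 b) \<longleftrightarrow> Xs n a < Xs n b"
  unfolding QP_def by simp

lemma top_diff:
  fixes a b :: "nat \<Rightarrow> bool" and m :: nat
  assumes "a \<noteq> b" "\<forall>k\<ge>m. a k = b k"
  obtains j where "j < m" "a j \<noteq> b j" "\<forall>k>j. a k = b k"
proof -
  define S where "S = {k. a k \<noteq> b k}"
  have sub: "S \<subseteq> {..<m}"
  proof
    fix k assume "k \<in> S"
    then have "a k \<noteq> b k" by (simp add: S_def)
    then show "k \<in> {..<m}" using assms(2) by (metis lessThan_iff not_le)
  qed
  then have fin: "finite S" by (rule finite_subset) simp
  have ne: "S \<noteq> {}" using assms(1) by (auto simp: S_def)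
  define j where "j = Max S"
  have jS: "j \<in> S" using fin ne by (simp add: j_def)
  have jmax: "\<forall>k\<in>S. k \<le> j" using fin by (simp add: j_def)
  show ?thesis
  proof (rule that)
    show "j < m" using jS sub by auto
    show "a j \<noteq> b j" using jS by (simp add: S_def)
    show "\<forall>k>j. a k = b k"
    proof (intro allI impI)
      fix k assume jk: "j < k"
      show "a k = b k"
      proof (rule ccontr)
        assume "a k \<noteq> b k"
        then have "k \<in> S" by (simp add: S_def)
        then show False using jmax jk by auto
      qed
    qed
  qed
qed

lemma pair_core:
  assumes ab: "a \<noteq> b" and abm: "\<forall>k\<ge>m. a k = b k" and mn: "m < n"
    and ra: "\<forall>k. m < k \<and> k < n \<longrightarrow> r k = a k" and arm: "a m \<noteq> r m"
  shows "(a m \<longrightarrow> line_above (QP n c1 c2 a) (QP n c1 c2 b) (QP n c1 c2 r)) \<and>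
         (\<not> a m \<longrightarrow> line_below (QP n c1 c2 a) (QP n c1 c2 b) (QP n c1 c2 r))"
proof -
  obtain j where jm: "j < m" and jd: "a j \<noteq> b j" and ja: "\<forall>k>j. a k = b k"
    using top_diff[OF ab abm] by blast
  show ?thesis
  proof (cases "a j")
    case False
    then have bj: "b j" using jd by simp
    have ab': "\<forall>k. j < k \<and> k < n \<longrightarrow> a k = b k" using ja by simp
    note C = core[OF jm mn False bj ab' ra arm]
    show ?thesis
      using C line_above_det[of "QP n c1 c2 a" "QP n c1 c2 b"] line_below_det[of "QP n c1 c2 a" "QP n c1 c2 b"]
      by (simp add: det3_QP fst_QP)
  next
    case True
    then have bj: "\<not> b j" using jd by simp
    have ab': "\<forall>k. j < k \<and> k < n \<longrightarrow> b k = a k" using ja by simp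
    have bm: "b m = a m" using abm by simp
    have rb: "\<forall>k. m < k \<and> k < n \<longrightarrow> r k = b k" using ra abm by simp
    have brm: "b m \<noteq> r m" using arm bm by simp
    note C = core[OF jm mn bj True ab' rb brm]
    have "b m \<longrightarrow> line_above (QP n c1 c2 b) (QP n c1 c2 a) (QP n c1 c2 r)"
      using C line_above_det[of "QP n c1 c2 b" "QP n c1 c2 a"] by (simp add: det3_QP fst_QP)
    moreover have "\<not> b m \<longrightarrow> line_below (QP n c1 c2 b) (QP n c1 c2 a) (QP n c1 c2 r)"
      using C line_below_det[of "QP n c1 c2 b" "QP n c1 c2 a"] by (simp add: det3_QP fst_QP)
    ultimately show ?thesis using bm
      by (metis line_above_sym line_below_sym)
  qed
qed

lemma la_noncol: "line_above p q r \<Longrightarrow> \<not> collinear3 p q r"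
proof -
  assume L: "line_above p q r"
  then have "fst p \<noteq> fst q" by (simp add: line_above_def)
  then consider "fst p < fst q" | "fst q < fst p" by linarith
  then show ?thesis
  proof cases
    case 1 then show ?thesis using L line_above_det[of p q r] by (simp add: col_det)
  next
    case 2
    have "line_above q p r" using L by (metis line_above_sym)
    then have "det3 q p r < 0" using 2 line_above_det[of q p r] by simp
    then show ?thesis using col_swap12[of p q r] by (simp add: col_det)
  qed
qed

lemma lb_noncol: "line_below p q r \<Longrightarrow> \<not> collinear3 p q r"
proof -
  assume L: "line_below p q r"
  then have "fst p \<noteq> fst q" by (simp add: line_below_def)
  then consider "fst p < fst q" | "fst q < fst p" by linarith
  then show ?thesis
  proof cases
    case 1 then show ?thesis using L line_below_det[of p q r] by (simp add: col_det)
  next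
    case 2
    have "line_below q p r" using L by (metis line_below_sym)
    then have "det3 q p r > 0" using 2 line_below_det[of q p r] by simp
    then show ?thesis using col_swap12[of p q r] by (simp add: col_det)
  qed
qed



lemma S_set_base: "k \<le> 2 \<or> l \<le> 2 \<Longrightarrow> S_set k l X = (\<exists>p. X = {p})"
  by (subst S_set.simps) (simp del: S_set.simps)

lemma S_set_rec: "\<not> (k \<le> 2 \<or> l \<le> 2) \<Longrightarrow> S_set k l X =
     (\<exists>L R. X = L \<union> R \<and> S_set (k - 1) l L \<and> S_set k (l - 1) R \<and>
                 (\<forall>p\<in>L. \<forall>q\<in>R. fst p < fst q) \<and> high_above R L)"
  by (subst S_set.simps) (simp del: S_set.simps)

declare S_set.simps[simp del]

definition ones :: "nat \<Rightarrow> (nat \<Rightarrow> bool) \<Rightarrow> nat" where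
  "ones n w = (\<Sum>k<n. of_bool (w k))"

definition Bw :: "nat \<Rightarrow> (nat \<Rightarrow> bool) \<Rightarrow> nat \<Rightarrow> (nat \<Rightarrow> bool) set" where
  "Bw n u j = {w. (\<forall>k\<ge>n. w k = u k) \<and> ones n w = j}"

lemma ones_0[simp]: "ones 0 w = 0"
  by (simp add: ones_def)

lemma ones_Suc: "ones (Suc n) w = ones n w + of_bool (w n)"
  by (simp add: ones_def)

lemma ones_le: "ones n w \<le> n"
  by (induction n) (auto simp: ones_Suc)

lemma ones_zero: "ones n w = 0 \<longleftrightarrow> (\<forall>k<n. \<not> w k)"
  by (induction n) (auto simp: ones_Suc less_Suc_eq)

lemma ones_full: "ones n w = n \<longleftrightarrow> (\<forall>k<n. w k)"
proof (induction n)
  case 0 then show ?case by (simp add: ones_def)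
next
  case (Suc n)
  have "ones n w \<le> n" by (rule ones_le)
  then show ?case using Suc by (auto simp: ones_Suc less_Suc_eq)
qed

lemma Bw_zero: "Bw n u 0 = {\<lambda>k. if k < n then False else u k}"
proof (rule set_eqI)
  fix w
  show "w \<in> Bw n u 0 \<longleftrightarrow> w \<in> {\<lambda>k. if k < n then False else u k}"
  proof
    assume "w \<in> Bw n u 0"
    then have h1: "\<forall>k\<ge>n. w k = u k" and h2: "\<forall>k<n. \<not> w k"
      by (auto simp: Bw_def ones_zero)
    have "w = (\<lambda>k. if k < n then False else u k)"
    proof
      fix k show "w k = (if k < n then False else u k)" using h1 h2 by (cases "k < n") auto
    qed
    then show "w \<in> {\<lambda>k. if k < n then False else u k}" by simp
  next
    assume "w \<in> {\<lambda>k. if k < n then False else u k}"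
    then show "w \<in> Bw n u 0" by (auto simp: Bw_def ones_zero)
  qed
qed

lemma Bw_full: "Bw n u n = {\<lambda>k. if k < n then True else u k}"
proof (rule set_eqI)
  fix w
  show "w \<in> Bw n u n \<longleftrightarrow> w \<in> {\<lambda>k. if k < n then True else u k}"
  proof
    assume "w \<in> Bw n u n"
    then have h1: "\<forall>k\<ge>n. w k = u k" and h2: "\<forall>k<n. w k"
      by (auto simp: Bw_def ones_full)
    have "w = (\<lambda>k. if k < n then True else u k)"
    proof
      fix k show "w k = (if k < n then True else u k)" using h1 h2 by (cases "k < n") auto
    qed
    then show "w \<in> {\<lambda>k. if k < n then True else u k}" by simp
  next
    assume "w \<in> {\<lambda>k. if k < n then True else u k}"
    then show "w \<in> Bw n u n" by (auto simp: Bw_def ones_full)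
  qed
qed

lemma ge_Suc_split: "(\<forall>k\<ge>m. P k) \<longleftrightarrow> P m \<and> (\<forall>k\<ge>Suc m. P k)"
  by (metis Suc_le_eq le_eq_less_or_eq order_refl)

lemma Bw_split:
  assumes "0 < j"
  shows "Bw (Suc m) u j = Bw m (u(m:=False)) j \<union> Bw m (u(m:=True)) (j-1)"
proof (rule set_eqI)
  fix w
  have e1: "(\<forall>k\<ge>m. w k = (u(m:=False)) k) \<longleftrightarrow> \<not> w m \<and> (\<forall>k\<ge>Suc m. w k = u k)"
    by (subst ge_Suc_split) auto
  have e2: "(\<forall>k\<ge>m. w k = (u(m:=True)) k) \<longleftrightarrow> w m \<and> (\<forall>k\<ge>Suc m. w k = u k)"
    by (subst ge_Suc_split) auto
  show "w \<in> Bw (Suc m) u j \<longleftrightarrow> w \<in> Bw m (u(m:=False)) j \<union> Bw m (u(m:=True)) (j-1)"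
    unfolding Bw_def mem_Collect_eq Un_iff e1 e2 ones_Suc using assms by auto
qed

lemma S_main:
  "n \<le> D \<Longrightarrow> j \<le> n \<Longrightarrow> S_set (n - j + 2) (j + 2) (QP D c1 c2 ` Bw n u j)"
proof (induction n arbitrary: u j)
  case 0
  then have j: "j = 0" by simp
  show ?case unfolding j Bw_zero by (subst S_set_base) auto
next
  case (Suc m)
  consider "j = 0" | "j = Suc m" | "0 < j" "j \<le> m" using Suc.prems by linarith
  then show ?case
  proof cases
    case 1 then show ?thesis unfolding 1 Bw_zero by (subst S_set_base) auto
  next
    case 2 then show ?thesis unfolding 2 Bw_full by (subst S_set_base) auto
  next
    case 3
    have mD: "m < D" using Suc.prems by simp
    define L where "L = QP D c1 c2 ` Bw m (u(m:=False)) j"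
    define R where "R = QP D c1 c2 ` Bw m (u(m:=True)) (j-1)"
    have X: "QP D c1 c2 ` Bw (Suc m) u j = L \<union> R"
      unfolding L_def R_def Bw_split[OF \<open>0 < j\<close>] by (rule image_Un)
    have SL: "S_set (Suc m - j + 2 - 1) (j + 2) L"
    proof -
      have e: "Suc m - j + 2 - 1 = m - j + 2" using 3 by simp
      show ?thesis unfolding L_def e by (rule Suc.IH) (use Suc.prems 3 in auto)
    qed
    have SR: "S_set (Suc m - j + 2) (j + 2 - 1) R"
    proof -
      have e: "Suc m - j + 2 = m - (j - 1) + 2" "j + 2 - 1 = (j - 1) + 2" using 3 by auto
      show ?thesis unfolding R_def e by (rule Suc.IH) (use Suc.prems 3 in auto)
    qed
    have ord: "\<forall>p\<in>L. \<forall>q\<in>R. fst p < fst q"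
    proof (intro ballI)
      fix p q assume "p \<in> L" "q \<in> R"
      then obtain a b where p: "p = QP D c1 c2 a" and a: "a \<in> Bw m (u(m:=False)) j"
        and q: "q = QP D c1 c2 b" and b: "b \<in> Bw m (u(m:=True)) (j-1)"
        unfolding L_def R_def by blast
      have am: "\<not> a m" and bm: "b m" using a b by (auto simp: Bw_def)
      have ab: "\<forall>k. m < k \<and> k < D \<longrightarrow> a k = b k" using a b by (auto simp: Bw_def)
      show "fst p < fst q" unfolding p q fst_QP using top_lt(1)[OF mD am bm ab] .
    qed
    have hi: "high_above R L"
      unfolding high_above_def
    proof (intro conjI ballI impI)
      fix p q r assume pR: "p \<in> R" and qR: "q \<in> R" and pq: "p \<noteq> q" and rL: "r \<in> L"
      then obtain a b c where p: "p = QP D c1 c2 a" and a: "a \<in> Bw m (u(m:=True)) (j-1)"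
        and q: "q = QP D c1 c2 b" and b: "b \<in> Bw m (u(m:=True)) (j-1)"
        and r: "r = QP D c1 c2 c" and c: "c \<in> Bw m (u(m:=False)) j"
        unfolding L_def R_def by blast
      have "a \<noteq> b" using pq p q by auto
      moreover have "\<forall>k\<ge>m. a k = b k" using a b by (auto simp: Bw_def)
      moreover have "\<forall>k. m < k \<and> k < D \<longrightarrow> c k = a k" using a c by (auto simp: Bw_def)
      moreover have "a m \<noteq> c m" and "a m" using a c by (auto simp: Bw_def)
      ultimately show "line_above p q r" unfolding p q r using pair_core[OF _ _ mD] by blast
    next
      fix p q r assume pL: "p \<in> L" and qL: "q \<in> L" and pq: "p \<noteq> q" and rR: "r \<in> R"
      then obtain a b c where p: "p = QP D c1 c2 a" and a: "a \<in> Bw m (u(m:=False)) j"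
        and q: "q = QP D c1 c2 b" and b: "b \<in> Bw m (u(m:=False)) j"
        and r: "r = QP D c1 c2 c" and c: "c \<in> Bw m (u(m:=True)) (j-1)"
        unfolding L_def R_def by blast
      have "a \<noteq> b" using pq p q by auto
      moreover have "\<forall>k\<ge>m. a k = b k" using a b by (auto simp: Bw_def)
      moreover have "\<forall>k. m < k \<and> k < D \<longrightarrow> c k = a k" using a c by (auto simp: Bw_def)
      moreover have "a m \<noteq> c m" and "\<not> a m" using a c by (auto simp: Bw_def)
      ultimately show "line_below p q r" unfolding p q r using pair_core[OF _ _ mD] by blast
    qed
    have nb: "\<not> (Suc m - j + 2 \<le> 2 \<or> j + 2 \<le> 2)" using 3 by simp
    show ?thesis unfolding X S_set_rec[OF nb] using SL SR ord hi by blast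
  qed
qed



lemma rt_ident:
  fixes x1 x2 x3 y1 y2 y3 T K ri rj rk :: real
  shows "det3 (ri*T + x1, -K*ri^2 + y1) (rj*T + x2, -K*rj^2 + y2) (rk*T + x3, -K*rk^2 + y3)
    = -K*T*(rj-ri)*(rk-rj)*(rk-ri) + ((rj-ri)*T*(y3-y1) - (rk-ri)*T*(y2-y1))
      + K*((rj-ri)*(rj+ri)*(x3-x1) - (rk-ri)*(rk+ri)*(x2-x1)) + ((x2-x1)*(y3-y1) - (y2-y1)*(x3-x1))"
  unfolding det3_def by (simp add: algebra_simps power2_eq_square)



lemma rt_abs:
  fixes x1 x2 x3 y1 y2 y3 T K W H ri rj rk dd :: real
  assumes ij: "ri + 1 \<le> rj" and jk: "rj + 1 \<le> rk" and i0: "0 \<le> ri" and kd: "rk \<le> dd"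
    and x: "0 \<le> x1" "x1 \<le> W" "0 \<le> x2" "x2 \<le> W" "0 \<le> x3" "x3 \<le> W"
    and y: "0 \<le> y1" "y1 \<le> H" "0 \<le> y2" "y2 \<le> H" "0 \<le> y3" "y3 \<le> H"
    and TW: "16*(dd+1)*W \<le> T" and KH: "8*H \<le> K" and K0: "0 < K" and T0: "0 < T"
  shows "det3 (ri*T + x1, -K*ri^2 + y1) (rj*T + x2, -K*rj^2 + y2) (rk*T + x3, -K*rk^2 + y3) < 0"
proof -
  define a where "a = rj - ri"
  define b where "b = rk - rj"
  define c where "c = rk - ri"
  have a1: "a \<ge> 1" and b1: "b \<ge> 1" and cab: "c = a + b" using ij jk by (auto simp: a_def b_def c_def)
  have W0: "0 \<le> W" using x by simp
  have H0: "0 \<le> H" using y by simp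
  have d0: "0 \<le> dd" using i0 ij jk kd by simp
  have P0: "K*T > 0" using K0 T0 by simp
  have E1: "a*T*(y3-y1) - c*T*(y2-y1) \<le> a*T*H + c*T*H"
  proof -
    have "a*T*(y3-y1) \<le> a*T*H" using a1 T0 y by (intro mult_left_mono) auto
    moreover have "c*T*(y1-y2) \<le> c*T*H" using a1 b1 cab T0 y by (intro mult_left_mono) auto
    ultimately show ?thesis by (simp add: algebra_simps)
  qed
  have E2: "K*(a*(rj+ri)*(x3-x1) - c*(rk+ri)*(x2-x1)) \<le> K*(a*(2*dd)*W + c*(2*dd)*W)"
  proof -
    have s1: "(rj+ri)*(x3-x1) \<le> (2*dd)*W"
    proof -
      have "(rj+ri)*(x3-x1) \<le> (rj+ri)*W" using i0 ij x by (intro mult_left_mono) auto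
      also have "\<dots> \<le> (2*dd)*W" using W0 ij jk kd i0 by (intro mult_right_mono) auto
      finally show ?thesis .
    qed
    have s2: "(rk+ri)*(x1-x2) \<le> (2*dd)*W"
    proof -
      have "(rk+ri)*(x1-x2) \<le> (rk+ri)*W" using i0 ij jk x by (intro mult_left_mono) auto
      also have "\<dots> \<le> (2*dd)*W" using W0 ij jk kd i0 by (intro mult_right_mono) auto
      finally show ?thesis .
    qed
    have "a*((rj+ri)*(x3-x1)) \<le> a*((2*dd)*W)" using s1 a1 by (intro mult_left_mono) auto
    moreover have "c*((rk+ri)*(x1-x2)) \<le> c*((2*dd)*W)" using s2 a1 b1 cab by (intro mult_left_mono) auto
    ultimately have "a*(rj+ri)*(x3-x1) - c*(rk+ri)*(x2-x1) \<le> a*(2*dd)*W + c*(2*dd)*W"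
      by (simp add: algebra_simps)
    then show ?thesis using K0 by (intro mult_left_mono) auto
  qed
  have E3: "(x2-x1)*(y3-y1) - (y2-y1)*(x3-x1) \<le> 2*W*H"
  proof -
    have "\<bar>(x2-x1)*(y3-y1)\<bar> \<le> W*H" unfolding abs_mult using x y
      by (intro mult_mono) auto
    moreover have "\<bar>(y2-y1)*(x3-x1)\<bar> \<le> H*W" unfolding abs_mult using x y
      by (intro mult_mono) auto
    ultimately show ?thesis by (simp add: abs_le_iff algebra_simps)
  qed
  have B1: "8*(a*T*H + c*T*H) \<le> K*T*a + K*T*c"
  proof -
    have "(a+c)*T*(8*H) \<le> (a+c)*T*K" using KH a1 b1 cab T0 by (intro mult_left_mono) auto
    then show ?thesis by (simp add: algebra_simps)
  qed
  have B2: "8*(K*(a*(2*dd)*W + c*(2*dd)*W)) \<le> K*T*a + K*T*c"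
  proof -
    have "16*dd*W \<le> T" using TW W0 by (smt (verit) mult_right_mono)
    then have "(K*(a+c))*(16*dd*W) \<le> (K*(a+c))*T" using K0 a1 b1 cab by (intro mult_left_mono) auto
    then show ?thesis by (simp add: algebra_simps)
  qed
  have B3: "64*(2*W*H) \<le> K*T"
  proof -
    have e: "16*(dd+1)*W = 16*dd*W + 16*W" by (simp add: algebra_simps)
    have "0 \<le> 16*dd*W" using W0 d0 by simp
    then have "16*W \<le> T" using TW e by linarith
    then have "(16*W)*(8*H) \<le> T*K" using KH W0 H0 by (intro mult_mono) auto
    then show ?thesis by (simp add: algebra_simps)
  qed
  have B4: "16*(K*T*a + K*T*c) + K*T < 64*(K*T*a*b*c)"
  proof -
    have ab: "1*1 \<le> a*b" using a1 b1 by (intro mult_mono) auto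
    have c0: "0 \<le> K*T*c" using P0 a1 b1 cab by simp
    have "K*T*c*1 \<le> K*T*c*(a*b)" using ab c0 by (intro mult_left_mono) auto
    moreover have "K*T*c*(a*b) = K*T*a*b*c" by (simp add: mult_ac)
    ultimately have f1: "K*T*c \<le> K*T*a*b*c" by simp
    have f2: "K*T*a \<le> K*T*c" using P0 a1 b1 cab by (intro mult_left_mono) auto
    have f3: "K*T*2 \<le> K*T*c" using P0 a1 b1 cab by (intro mult_left_mono) auto
    show ?thesis using f1 f2 f3 P0 by argo
  qed
  have "det3 (ri*T + x1, -K*ri^2 + y1) (rj*T + x2, -K*rj^2 + y2) (rk*T + x3, -K*rk^2 + y3)
    = -K*T*a*b*c + (a*T*(y3-y1) - c*T*(y2-y1))
      + K*(a*(rj+ri)*(x3-x1) - c*(rk+ri)*(x2-x1)) + ((x2-x1)*(y3-y1) - (y2-y1)*(x3-x1))"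
    unfolding rt_ident a_def b_def c_def by simp
  then show ?thesis using E1 E2 E3 B1 B2 B3 B4 by argo
qed



definition TT :: "nat \<Rightarrow> real" where "TT d = 16*(real d+1)*4^d"
definition KK :: "nat \<Rightarrow> real" where "KK d = 8*(real d+1)*4^d"
definition blk :: "nat \<Rightarrow> nat \<Rightarrow> (nat \<Rightarrow> bool) \<Rightarrow> point" where
  "blk d i w = QP d (real i * TT d) (- KK d * (real i)^2) w"
definition FF :: "nat \<Rightarrow> bool" where "FF = (\<lambda>_. False)"
definition Ablk :: "nat \<Rightarrow> nat \<Rightarrow> point set" where
  "Ablk d i = blk d i ` Bw d FF i"

lemma blk_fst: "fst (blk d i w) = real i * TT d + Xs d w"
  by (simp add: blk_def QP_def)
lemma blk_snd: "snd (blk d i w) = - KK d * (real i)^2 + Ys d w"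
  by (simp add: blk_def QP_def)

lemma Xs_nonneg: "0 \<le> Xs n w"
  unfolding Xs_def by (intro sum_nonneg) auto
lemma Ys_nonneg: "0 \<le> Ys n w"
  unfolding Ys_def by (intro sum_nonneg) auto

lemma Xs_le: "Xs n w \<le> 4^n - 1"
proof -
  have "Xs n w \<le> (\<Sum>k<n. (4::real)^k)"
    unfolding Xs_def by (intro sum_mono) auto
  moreover have "3 * (\<Sum>k<n. (4::real)^k) = 4^n - 1" by (rule geo4')
  moreover have "0 \<le> (\<Sum>k<n. (4::real)^k)" by (intro sum_nonneg) auto
  ultimately show ?thesis by argo
qed

lemma Ys_le: "Ys n w \<le> real n * 4^n"
proof -
  have "Ys n w \<le> (\<Sum>k<n. real n * 4^k)"
    unfolding Ys_def
  proof (intro sum_mono)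
    fix k assume "k \<in> {..<n}"
    then have "real k + 1 \<le> real n" by simp
    then have "(real k + 1) * 4^k \<le> real n * 4^k" by (intro mult_right_mono) auto
    moreover have "0 \<le> (real k + 1) * (4::real)^k" by simp
    ultimately show "of_bool (w k) * ((real k + 1) * 4^k) \<le> real n * 4^k" by (cases "w k") auto
  qed
  also have "\<dots> = real n * (\<Sum>k<n. 4^k)" by (simp add: sum_distrib_left)
  also have "\<dots> \<le> real n * 4^n"
  proof -
    have "3 * (\<Sum>k<n. (4::real)^k) = 4^n - 1" by (rule geo4')
    moreover have "0 \<le> (\<Sum>k<n. (4::real)^k)" by (intro sum_nonneg) auto
    ultimately have "(\<Sum>k<n. (4::real)^k) \<le> 4^n" by argo
    then show ?thesis by (intro mult_left_mono) auto
  qed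
  finally show ?thesis .
qed

lemma Xs_Ints: "Xs n w \<in> \<int>"
  unfolding Xs_def by (intro Ints_sum) (auto simp: of_bool_def)
lemma Ys_Ints: "Ys n w \<in> \<int>"
  unfolding Ys_def by (intro Ints_sum) (auto simp: of_bool_def)

lemma TT_Ints: "TT d \<in> \<int>" unfolding TT_def by (intro Ints_mult Ints_add Ints_power) auto
lemma KK_Ints: "KK d \<in> \<int>" unfolding KK_def by (intro Ints_mult Ints_add Ints_power) auto

lemma blk_Ints: "fst (blk d i w) \<in> \<int> \<and> snd (blk d i w) \<in> \<int>"
  unfolding blk_fst blk_snd using TT_Ints KK_Ints Xs_Ints Ys_Ints
  by (intro conjI Ints_add Ints_mult Ints_minus Ints_power) auto

lemma cross:
  assumes ij: "i < j"
  shows "fst (blk d i a) < fst (blk d j b)" "snd (blk d j b) < snd (blk d i a)"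
proof -
  have T4: "4^d \<le> TT d" unfolding TT_def by simp
  have ij': "real i + 1 \<le> real j" using ij by simp
  have "(real i + 1) * TT d \<le> real j * TT d" using ij' T4
    by (intro mult_right_mono) (auto intro: order_trans[of 0 "4^d"])
  moreover have "(real i + 1) * TT d = real i * TT d + TT d" by (simp add: algebra_simps)
  moreover have "Xs d a \<le> 4^d - 1" by (rule Xs_le)
  moreover have "0 \<le> Xs d b" by (rule Xs_nonneg)
  ultimately show "fst (blk d i a) < fst (blk d j b)" unfolding blk_fst using T4 by argo
  have sq: "(real i)^2 + 1 \<le> (real j)^2"
  proof -
    have "(real i + 1)^2 \<le> (real j)^2" using ij' by (intro power_mono) auto
    moreover have "(real i + 1)^2 = (real i)^2 + 2 * real i + 1" by (simp add: power2_sum)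
    moreover have "0 \<le> real i" by simp
    ultimately show ?thesis by argo
  qed
  have K0: "0 \<le> KK d" unfolding KK_def by simp
  have "KK d * ((real i)^2 + 1) \<le> KK d * (real j)^2" using sq K0 by (intro mult_left_mono) auto
  moreover have "KK d * ((real i)^2 + 1) = KK d * (real i)^2 + KK d" by (simp add: algebra_simps)
  moreover have "Ys d b \<le> real d * 4^d" by (rule Ys_le)
  moreover have "0 \<le> Ys d a" by (rule Ys_nonneg)
  moreover have "real d * 4^d < KK d" unfolding KK_def by simp
  ultimately show "snd (blk d j b) < snd (blk d i a)" unfolding blk_snd by argo
qed

lemma S_blk: "i \<le> d \<Longrightarrow> S_set (d + 2 - i) (i + 2) (Ablk d i)"
proof -
  assume "i \<le> d"
  then have e: "d + 2 - i = d - i + 2" by simp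
  show ?thesis unfolding e Ablk_def blk_def[abs_def]
    using S_main[of d d i "real i * TT d" "- KK d * (real i)^2" FF] \<open>i \<le> d\<close> by simp
qed

lemma right_turn_blk:
  assumes "i < j" "j < k" "k \<le> d"
  shows "right_turn (blk d i a) (blk d j b) (blk d k c)"
proof -
  have rt: "right_turn p q r \<longleftrightarrow> det3 p q r < 0" for p q r
    by (simp add: right_turn_def det3_def)
  have e: "blk d i w = (real i * TT d + Xs d w, - KK d * (real i)^2 + Ys d w)" for i w
    by (simp add: blk_def QP_def)
  have Xb: "Xs d w \<le> 4^d" for w using Xs_le[of d w] by simp
  have Yb: "Ys d w \<le> real d * 4^d" for w by (rule Ys_le)
  show ?thesis unfolding rt e
  proof (rule rt_abs[where W="4^d" and H="real d * 4^d" and dd="real d"])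
    show "16 * (real d + 1) * 4 ^ d \<le> TT d" by (simp add: TT_def)
    show "8 * (real d * 4 ^ d) \<le> KK d" by (simp add: KK_def)
    show "0 < KK d" by (simp add: KK_def)
    show "0 < TT d" by (simp add: TT_def)
  qed (use assms Xb Yb Xs_nonneg Ys_nonneg in auto)
qed



lemma noncol_of: "line_above p q r \<or> line_below p q r \<Longrightarrow> \<not> collinear3 p q r"
  using la_noncol lb_noncol by blast

lemma col_rot: "collinear3 q r p = collinear3 p q r"
  using col_swap12[of p q r] col_swap23[of q p r] by simp

lemma Bw_FF_top: "w \<in> Bw d FF i \<Longrightarrow> k \<ge> d \<Longrightarrow> \<not> w k"
  by (auto simp: Bw_def FF_def)

lemma blk_QP: "blk d i = QP d (real i * TT d) (- KK d * (real i)^2)"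
  by (simp add: blk_def[abs_def])

lemma np_same:
  assumes a: "a \<in> Bw d FF i" and b: "b \<in> Bw d FF i" and c: "c \<in> Bw d FF i"
    and ab: "a \<noteq> b" and bc: "b \<noteq> c" and ac: "a \<noteq> c"
  shows "\<not> collinear3 (blk d i a) (blk d i b) (blk d i c)"
proof -
  define S where "S = {k. \<not> (a k = b k \<and> b k = c k)}"
  have sub: "S \<subseteq> {..<d}"
  proof
    fix k assume "k \<in> S"
    then show "k \<in> {..<d}" using Bw_FF_top[OF a] Bw_FF_top[OF b] Bw_FF_top[OF c]
      by (auto simp: S_def) (meson not_le)+
  qed
  then have fin: "finite S" by (rule finite_subset) simp
  have ne: "S \<noteq> {}"
  proof
    assume "S = {}"
    then have "\<forall>k. a k = b k" by (auto simp: S_def)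
    then show False using ab by auto
  qed
  define m where "m = Max S"
  have mS: "m \<in> S" using fin ne by (simp add: m_def)
  have md: "m < d" using mS sub by auto
  have above: "\<forall>k>m. a k = b k \<and> b k = c k"
  proof (intro allI impI)
    fix k assume "m < k"
    then have "k \<notin> S" using fin m_def by (metis Max_ge not_le)
    then show "a k = b k \<and> b k = c k" by (simp add: S_def)
  qed
  have notall: "\<not> (a m = b m \<and> b m = c m)" using mS by (simp add: S_def)
  note QP = blk_QP[of d i]
  consider "a m = b m" | "a m = c m" "a m \<noteq> b m" | "b m = c m" "a m \<noteq> b m" "a m \<noteq> c m"
    by blast
  then show ?thesis
  proof cases
    case 1
    have "\<forall>k\<ge>m. a k = b k" using 1 above by (metis le_neq_implies_less)
    moreover have "\<forall>k. m < k \<and> k < d \<longrightarrow> c k = a k" using above by simp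
    moreover have "a m \<noteq> c m" using 1 notall by simp
    ultimately show ?thesis unfolding QP using pair_core[OF ab _ md] noncol_of by blast
  next
    case 2
    have "\<forall>k\<ge>m. a k = c k" using 2 above by (metis le_neq_implies_less)
    moreover have "\<forall>k. m < k \<and> k < d \<longrightarrow> b k = a k" using above by simp
    moreover have "a m \<noteq> b m" using 2 by simp
    ultimately have "\<not> collinear3 (blk d i a) (blk d i c) (blk d i b)"
      unfolding QP using pair_core[OF ac _ md] noncol_of by blast
    then show ?thesis using col_swap23 by metis
  next
    case 3
    have "\<forall>k\<ge>m. b k = c k" using 3 above by (metis le_neq_implies_less)
    moreover have "\<forall>k. m < k \<and> k < d \<longrightarrow> a k = b k" using above by simp
    moreover have "b m \<noteq> a m" using 3 by simp
    ultimately have "\<not> collinear3 (blk d i b) (blk d i c) (blk d i a)"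
      unfolding QP using pair_core[OF bc _ md] noncol_of by blast
    then show ?thesis using col_rot by metis
  qed
qed

lemma np_pair0:
  assumes xl: "Xs d a < Xs d b" and yl: "Ys d a < Ys d b" and ii: "i' \<noteq> i"
  shows "\<not> collinear3 (blk d i a) (blk d i b) (blk d i' c)"
proof -
  define p where "p = blk d i a"
  define q where "q = blk d i b"
  define r where "r = blk d i' c"
  have ex: "fst q - fst p > 0" using xl by (simp add: p_def q_def blk_fst)
  have ey: "snd q - snd p > 0" using yl by (simp add: p_def q_def blk_snd)
  have "det3 p q r \<noteq> 0"
  proof (cases "i < i'")
    case True
    have "fst p < fst r" "snd r < snd p" using cross[OF True] by (auto simp: p_def r_def)
    then have "(fst q - fst p) * (snd r - snd p) < 0" "(snd q - snd p) * (fst r - fst p) > 0"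
      using ex ey by (auto intro: mult_pos_neg mult_pos_pos)
    then show ?thesis unfolding det3_def by linarith
  next
    case False
    then have lt: "i' < i" using ii by simp
    have "fst r < fst p" "snd p < snd r" using cross[OF lt] by (auto simp: p_def r_def)
    then have "(fst q - fst p) * (snd r - snd p) > 0" "(snd q - snd p) * (fst r - fst p) < 0"
      using ex ey by (auto intro: mult_pos_neg mult_pos_pos)
    then show ?thesis unfolding det3_def by linarith
  qed
  then show ?thesis by (simp add: col_det p_def q_def r_def)
qed

lemma np_pair:
  assumes a: "a \<in> Bw d FF i" and b: "b \<in> Bw d FF i" and ab: "a \<noteq> b" and ii: "i' \<noteq> i"
  shows "\<not> collinear3 (blk d i a) (blk d i b) (blk d i' c)"
proof -
  have "\<forall>k\<ge>d. a k = b k" using Bw_FF_top[OF a] Bw_FF_top[OF b] by simp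
  then obtain j where jd: "j < d" and jab: "a j \<noteq> b j" and ja: "\<forall>k>j. a k = b k"
    using top_diff[OF ab] by blast
  show ?thesis
  proof (cases "a j")
    case False
    then have "b j" using jab by simp
    have "\<forall>k. j < k \<and> k < d \<longrightarrow> a k = b k" using ja by simp
    note T = top_lt[OF jd False \<open>b j\<close> this]
    show ?thesis using np_pair0[OF T ii] .
  next
    case True
    then have "\<not> b j" using jab by simp
    have "\<forall>k. j < k \<and> k < d \<longrightarrow> b k = a k" using ja by simp
    note T = top_lt[OF jd \<open>\<not> b j\<close> True this]
    have "\<not> collinear3 (blk d i b) (blk d i a) (blk d i' c)" using np_pair0[OF T ii] .
    then show ?thesis using col_swap12 by metis
  qed
qed

lemma np_sorted:
  assumes o: "i1 \<le> i2" "i2 \<le> i3" "i3 \<le> d"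
    and a: "a \<in> Bw d FF i1" and b: "b \<in> Bw d FF i2" and c: "c \<in> Bw d FF i3"
    and pq: "blk d i1 a \<noteq> blk d i2 b" and qr: "blk d i2 b \<noteq> blk d i3 c" and pr: "blk d i1 a \<noteq> blk d i3 c"
  shows "\<not> collinear3 (blk d i1 a) (blk d i2 b) (blk d i3 c)"
proof -
  consider "i1 = i2" "i2 = i3" | "i1 = i2" "i2 < i3" | "i1 < i2" "i2 = i3" | "i1 < i2" "i2 < i3"
    using o by linarith
  then show ?thesis
  proof cases
    case 1
    then show ?thesis using np_same[of a d i1 b c] a b c pq qr pr by auto
  next
    case 2
    then show ?thesis using np_pair[of a d i1 b i3 c] a b pq by auto
  next
    case 3
    then have "\<not> collinear3 (blk d i2 b) (blk d i2 c) (blk d i1 a)"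
      using np_pair[of b d i2 c i1 a] b c qr by auto
    then show ?thesis using 3 col_rot by metis
  next
    case 4
    have "right_turn (blk d i1 a) (blk d i2 b) (blk d i3 c)" using right_turn_blk 4 o by blast
    then show ?thesis by (simp add: right_turn_def collinear3_def)
  qed
qed



lemma size_bounds:
  fixes d :: nat
  shows "real d * TT d + 4^d - 1 \<le> 40 * 4^d * (real d)^3"
    and "KK d * (real d)^2 + real d * 4^d \<le> 40 * 4^d * (real d)^3"
proof -
  have p: "(0::real) < 4^d" by simp
  show "real d * TT d + 4^d - 1 \<le> 40 * 4^d * (real d)^3"
  proof (cases "d = 0")
    case True then show ?thesis by (simp add: TT_def)
  next
    case False
    then have x1: "1 \<le> real d" by simp
    have x2: "real d \<le> (real d)^2" using x1 by (simp add: power2_eq_square)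
    have x3: "(real d)^2 \<le> (real d)^3" using x1 by (simp add: power3_eq_cube power2_eq_square)
    have "16*(real d)^2 + 16*real d + 1 \<le> 40*(real d)^3" using x1 x2 x3 by argo
    then have "(16*(real d)^2 + 16*real d + 1) * 4^d \<le> (40*(real d)^3) * 4^d"
      using p by (intro mult_right_mono) auto
    moreover have "real d * TT d + 4^d = (16*(real d)^2 + 16*real d + 1) * 4^d"
      by (simp add: TT_def algebra_simps power2_eq_square)
    ultimately show ?thesis by (simp add: algebra_simps)
  qed
  show "KK d * (real d)^2 + real d * 4^d \<le> 40 * 4^d * (real d)^3"
  proof (cases "d = 0")
    case True then show ?thesis by (simp add: KK_def)
  next
    case False
    then have x1: "1 \<le> real d" by simp
    have x2: "real d \<le> (real d)^2" using x1 by (simp add: power2_eq_square)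
    have x3: "(real d)^2 \<le> (real d)^3" using x1 by (simp add: power3_eq_cube power2_eq_square)
    have "8*(real d)^3 + 8*(real d)^2 + real d \<le> 40*(real d)^3" using x1 x2 x3 by argo
    then have "(8*(real d)^3 + 8*(real d)^2 + real d) * 4^d \<le> (40*(real d)^3) * 4^d"
      using p by (intro mult_right_mono) auto
    moreover have "KK d * (real d)^2 + real d * 4^d = (8*(real d)^3 + 8*(real d)^2 + real d) * 4^d"
      by (simp add: KK_def algebra_simps power2_eq_square power3_eq_cube)
    ultimately show ?thesis by (simp add: algebra_simps)
  qed
qed

lemma in_blk_bounds:
  assumes "i \<le> d"
  shows "0 \<le> fst (blk d i w)" "fst (blk d i w) \<le> 0 + 40 * 4^d * (real d)^3"
    "- KK d * (real d)^2 \<le> snd (blk d i w)" "snd (blk d i w) \<le> - KK d * (real d)^2 + 40 * 4^d * (real d)^3"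
proof -
  have T0: "0 \<le> TT d" by (simp add: TT_def)
  have K0: "0 \<le> KK d" by (simp add: KK_def)
  have "real i * TT d \<le> real d * TT d" using assms T0 by (intro mult_right_mono) auto
  moreover have "0 \<le> real i * TT d" using T0 by simp
  moreover note Xs_nonneg[of d w] Xs_le[of d w] size_bounds(1)[of d]
  ultimately show "0 \<le> fst (blk d i w)" "fst (blk d i w) \<le> 0 + 40 * 4^d * (real d)^3"
    unfolding blk_fst by argo+
  have "(real i)^2 \<le> (real d)^2" using assms by (intro power_mono) auto
  then have "KK d * (real i)^2 \<le> KK d * (real d)^2" using K0 by (intro mult_left_mono) auto
  moreover have "0 \<le> KK d * (real i)^2" using K0 by simp
  moreover note Ys_nonneg[of d w] Ys_le[of d w] size_bounds(2)[of d]
  ultimately show "- KK d * (real d)^2 \<le> snd (blk d i w)"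
    "snd (blk d i w) \<le> - KK d * (real d)^2 + 40 * 4^d * (real d)^3"
    unfolding blk_snd by argo+
qed

theorem theorem4:
  shows "\<exists>C::real. C > 0 \<and> (\<forall>t::nat. t \<ge> 2 \<longrightarrow>
     (let n = (2::nat) ^ (t - 2) in
      \<exists>P. ES_construction t P \<and> general_position P \<and> integral_points P \<and>
          in_square (C * (real n)^2 * (log 2 (real n))^3) P))"
proof (intro exI conjI allI impI)
  show "(40::real) > 0" by simp
  fix t :: nat assume t2: "2 \<le> t"
  define d where "d = t - 2"
  have td: "t - 2 = d" by (simp add: d_def)
  define P where "P = (\<Union>i\<in>{0..d}. Ablk d i)"
  have side: "40 * (real ((2::nat)^(t-2)))^2 * (log 2 (real ((2::nat)^(t-2))))^3 = 40 * 4^d * (real d)^3"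
  proof -
    have "real ((2::nat)^(t-2)) = 2^d" by (simp add: td)
    moreover have "((2::real)^d)^2 = 4^d"
    proof -
      have "((2::real)^d)^2 = 2^d * 2^d" by (rule power2_eq_square)
      also have "\<dots> = (2 * 2)^d" by (rule power_mult_distrib[symmetric])
      finally show ?thesis by simp
    qed
    moreover have "log 2 ((2::real)^d) = real d" by simp
    ultimately show ?thesis by simp
  qed
  have ES: "ES_construction t P"
    unfolding ES_construction_def td
  proof (rule exI[of _ "Ablk d"], intro conjI)
    show "P = (\<Union>i\<in>{0..d}. Ablk d i)" by (simp add: P_def)
    show "\<forall>i\<in>{0..d}. S_set (t - i) (i + 2) (Ablk d i)"
    proof
      fix i assume "i \<in> {0..d}"
      then have "i \<le> d" by simp
      moreover have "t - i = d + 2 - i" using t2 by (simp add: d_def)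
      ultimately show "S_set (t - i) (i + 2) (Ablk d i)" using S_blk[of i d] by (simp only:)
    qed
    show "\<forall>i\<in>{0..d}. \<forall>j\<in>{0..d}. i < j \<longrightarrow> (\<forall>p\<in>Ablk d i. \<forall>q\<in>Ablk d j. fst p < fst q)"
    proof (intro ballI impI)
      fix i j p q assume ij: "i < j" and "p \<in> Ablk d i" "q \<in> Ablk d j"
      then obtain a b where p: "p = blk d i a" and q: "q = blk d j b" unfolding Ablk_def by blast
      show "fst p < fst q" unfolding p q by (rule cross(1)[OF ij])
    qed
    show "\<forall>i\<in>{0..d}. \<forall>j\<in>{0..d}. i \<noteq> j \<longrightarrow> (\<forall>p\<in>Ablk d i. \<forall>q\<in>Ablk d j.
         fst p \<noteq> fst q \<and> (snd q - snd p) / (fst q - fst p) < 0)"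
    proof (intro ballI impI)
      fix i j p q assume "i \<in> {0..d}" "j \<in> {0..d}" "i \<noteq> j" "p \<in> Ablk d i" "q \<in> Ablk d j"
      then obtain a b where p: "p = blk d i a" and q: "q = blk d j b" unfolding Ablk_def by blast
      show "fst p \<noteq> fst q \<and> (snd q - snd p) / (fst q - fst p) < 0"
      proof (cases "i < j")
        case True
        have "fst p < fst q" "snd q < snd p" using cross[OF True] p q by auto
        then show ?thesis by (auto intro: divide_neg_pos)
      next
        case False
        then have "j < i" using \<open>i \<noteq> j\<close> by simp
        have "fst q < fst p" "snd p < snd q" using cross[OF \<open>j < i\<close>] p q by auto
        then show ?thesis by (auto intro: divide_pos_neg)
      qed
    qed
    show "\<forall>i j k. i < j \<and> j < k \<and> k \<le> d \<longrightarrow>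
         (\<forall>p\<in>Ablk d i. \<forall>q\<in>Ablk d j. \<forall>r\<in>Ablk d k. right_turn p q r)"
    proof (intro allI impI ballI)
      fix i j k p q r assume o: "i < j \<and> j < k \<and> k \<le> d" and "p \<in> Ablk d i" "q \<in> Ablk d j" "r \<in> Ablk d k"
      then obtain a b c where p: "p = blk d i a" and q: "q = blk d j b" and r: "r = blk d k c"
        unfolding Ablk_def by blast
      show "right_turn p q r" unfolding p q r using o by (intro right_turn_blk) auto
    qed
  qed
  have GP: "general_position P"
    unfolding general_position_def
  proof (intro ballI impI)
    fix p q r assume "p \<in> P" "q \<in> P" "r \<in> P" and dist: "p \<noteq> q \<and> q \<noteq> r \<and> p \<noteq> r"
    then obtain i1 i2 i3 a b c where i: "i1 \<le> d" "i2 \<le> d" "i3 \<le> d"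
      and a: "a \<in> Bw d FF i1" and b: "b \<in> Bw d FF i2" and c: "c \<in> Bw d FF i3"
      and p: "p = blk d i1 a" and q: "q = blk d i2 b" and r: "r = blk d i3 c"
      unfolding P_def Ablk_def by force
    have key: "\<And>j1 j2 j3 x y z. j1 \<le> j2 \<Longrightarrow> j2 \<le> j3 \<Longrightarrow> j3 \<le> d \<Longrightarrow>
        x \<in> Bw d FF j1 \<Longrightarrow> y \<in> Bw d FF j2 \<Longrightarrow> z \<in> Bw d FF j3 \<Longrightarrow>
        blk d j1 x \<noteq> blk d j2 y \<Longrightarrow> blk d j2 y \<noteq> blk d j3 z \<Longrightarrow> blk d j1 x \<noteq> blk d j3 z \<Longrightarrow>
        \<not> collinear3 (blk d j1 x) (blk d j2 y) (blk d j3 z)"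
      by (rule np_sorted)
    have d1: "p \<noteq> q" "q \<noteq> r" "p \<noteq> r" using dist by auto
    consider "i1 \<le> i2" "i2 \<le> i3" | "i1 \<le> i3" "i3 \<le> i2" | "i2 \<le> i1" "i1 \<le> i3"
      | "i2 \<le> i3" "i3 \<le> i1" | "i3 \<le> i1" "i1 \<le> i2" | "i3 \<le> i2" "i2 \<le> i1" by linarith
    then show "\<not> collinear3 p q r"
    proof cases
      case 1 then show ?thesis using key[OF _ _ _ a b c] i d1 p q r by auto
    next
      case 2
      then have "\<not> collinear3 p r q" using key[OF _ _ _ a c b] i d1 p q r by auto
      then show ?thesis using col_swap23 by metis
    next
      case 3
      then have "\<not> collinear3 q p r" using key[OF _ _ _ b a c] i d1 p q r by auto
      then show ?thesis using col_swap12 by metis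
    next
      case 4
      then have "\<not> collinear3 q r p" using key[OF _ _ _ b c a] i d1 p q r by auto
      then show ?thesis using col_rot by metis
    next
      case 5
      then have "\<not> collinear3 r p q" using key[OF _ _ _ c a b] i d1 p q r by auto
      then show ?thesis using col_rot by metis
    next
      case 6
      then have "\<not> collinear3 r q p" using key[OF _ _ _ c b a] i d1 p q r by auto
      then show ?thesis using col_swap12 col_swap23 by metis
    qed
  qed
  have IP: "integral_points P"
    unfolding integral_points_def P_def Ablk_def using blk_Ints by blast
  have SQ: "in_square (40 * 4^d * (real d)^3) P"
    unfolding in_square_def
  proof (intro exI ballI)
    fix p assume "p \<in> P"
    then obtain i w where "i \<le> d" and p: "p = blk d i w" unfolding P_def Ablk_def by force
    show "0 \<le> fst p \<and> fst p \<le> 0 + 40 * 4^d * (real d)^3 \<and>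
          - KK d * (real d)^2 \<le> snd p \<and> snd p \<le> - KK d * (real d)^2 + 40 * 4^d * (real d)^3"
      using in_blk_bounds[OF \<open>i \<le> d\<close>] p by blast
  qed
  show "let n = (2::nat) ^ (t - 2) in
      \<exists>P. ES_construction t P \<and> general_position P \<and> integral_points P \<and>
          in_square (40 * (real n)^2 * (log 2 (real n))^3) P"
    unfolding Let_def side using ES GP IP SQ by blast
qed


end
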